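(* Let $p$ be a fixed point in $\mathbb{S}_1^3$ and $\gamma=\gamma(t)$ a timelike unit speed curve in $\mathbb{S}_1^2\subset T_p\mathbb{S}_1^3$ with geodesic curvature $\kappa_\gamma$. For any nonzero function $\eta(t)$, let $\alpha(t)=\exp_p(\eta(t)\gamma(t))=\cos(\eta(t))p+\sin(\eta(t))\gamma(t)$ be a timelike regular curve in $\mathbb{S}_1^3$ with geodesic curvature $\kappa_g$. Then $$\kappa_\gamma^2\le\frac{\|\alpha'\|^4\kappa_g^2}{\sin^2(\eta)},$$ with equality holding identically if and only if $\alpha$ is a timelike rectifying curve in $\mathbb{S}_1^3$.
   Context: Minkowski 4-space $\mathbb{R}_1^4$ is $\mathbb{R}^4$ with $\langle x,y\rangle=-x_1y_1+x_2y_2+x_3y_3+x_4y_4$, $\|x\|=\sqrt{|\langle x,x\rangle|}$; $\alpha'=d\alpha/dt$. De Sitter 3-space $\mathbb{S}_1^3=\{x:\langle x,x\rangle=1\}$. $\mathbb{S}_1^2\subset T_p\mathbb{S}_1^3$ is $\{w:\langle w,p\rangle=0,\langle w,w\rangle=1\}$. For a timelike unit speed curve $\gamma$ in this $\mathbb{S}_1^2$, its geodesic curvature is $\kappa_\gamma=\det(\gamma,\gamma',\gamma'',p)$, and $\gamma''=\gamma+\kappa_\gamma N_\gamma$ with $N_\gamma=p\times\gamma\times\gamma'$ (formal determinant with first row $(-e_1,e_2,e_3,e_4)$). For a timelike curve $\alpha$ in $\mathbb{S}_1^3$ with arc length $s$: $T_\alpha=d\alpha/ds$, $\kappa_g=\|dT_\alpha/ds-\alpha\|$,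 $N_\alpha=(dT_\alpha/ds-\alpha)/\kappa_g$. Throughout, curves are assumed non-geodesic ($\kappa_g>0$) and non-planar (geodesic torsion $\neq0$). $\alpha$ is a timelike rectifying curve (with respect to $p\notin\mathrm{Im}(\alpha)$) if at each point $\alpha(s)$ the tangent vector of the geodesic of $\mathbb{S}_1^3$ joining $p$ and $\alpha(s)$ is pseudo-orthogonal to $N_\alpha(s)$. *)

theory Defs
  imports "HOL-Analysis.Analysis"
begin

definition mink :: "real^4 \<Rightarrow> real^4 \<Rightarrow> real" where
  "mink x y = - x$1 * y$1 + x$2 * y$2 + x$3 * y$3 + x$4 * y$4"

definition mnorm :: "real^4 \<Rightarrow> real" where
  "mnorm x = sqrt \<bar>mink x x\<bar>"

definition det4 :: "real^4 \<Rightarrow> real^4 \<Rightarrow> real^4 \<Rightarrow> real^4 \<Rightarrow> real" where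
  "det4 a b c d = det (vector [a, b, c, d] :: real^4^4)"

text \<open>Ternary cross product x \<times> y \<times> z: formal determinant with first row
  (-e1, e2, e3, e4) and rows x, y, z below it (cofactor expansion along the first row).\<close>
definition det3 :: "real \<Rightarrow> real \<Rightarrow> real \<Rightarrow> real \<Rightarrow> real \<Rightarrow> real \<Rightarrow> real \<Rightarrow> real \<Rightarrow> real \<Rightarrow> real" where
  "det3 a11 a12 a13 a21 a22 a23 a31 a32 a33 =
     a11 * (a22 * a33 - a23 * a32) - a12 * (a21 * a33 - a23 * a31) + a13 * (a21 * a32 - a22 * a31)"

definition cross4 :: "real^4 \<Rightarrow> real^4 \<Rightarrow> real^4 \<Rightarrow> real^4" where
  "cross4 x y z = vector [
     - det3 (x$2) (x$3) (x$4) (y$2) (y$3) (y$4) (z$2) (z$3) (z$4),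
     - det3 (x$1) (x$3) (x$4) (y$1) (y$3) (y$4) (z$1) (z$3) (z$4),
       det3 (x$1) (x$2) (x$4) (y$1) (y$2) (y$4) (z$1) (z$2) (z$4),
     - det3 (x$1) (x$2) (x$3) (y$1) (y$2) (y$3) (z$1) (z$2) (z$3)]"

abbreviation vd :: "(real \<Rightarrow> real^4) \<Rightarrow> real \<Rightarrow> real^4" where
  "vd f t \<equiv> vector_derivative f (at t)"

definition kappa_gamma :: "real^4 \<Rightarrow> (real \<Rightarrow> real^4) \<Rightarrow> real \<Rightarrow> real" where
  "kappa_gamma p \<gamma> t = det4 (\<gamma> t) (vd \<gamma> t) (vd (vd \<gamma>) t) p"

text \<open>Frenet apparatus of a timelike regular curve \<alpha> in S^3_1, given in an arbitrary
  regular parameter t; derivatives with respect to arc length s are d/ds = (1/\<parallel>\<alpha>'\<parallel>) d/dt.\<close>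
definition T_alpha :: "(real \<Rightarrow> real^4) \<Rightarrow> real \<Rightarrow> real^4" where
  "T_alpha \<alpha> t = (1 / mnorm (vd \<alpha> t)) *\<^sub>R vd \<alpha> t"

definition dds :: "(real \<Rightarrow> real^4) \<Rightarrow> (real \<Rightarrow> real^4) \<Rightarrow> real \<Rightarrow> real^4" where
  "dds \<alpha> F t = (1 / mnorm (vd \<alpha> t)) *\<^sub>R vd F t"

definition kappa_g :: "(real \<Rightarrow> real^4) \<Rightarrow> real \<Rightarrow> real" where
  "kappa_g \<alpha> t = mnorm (dds \<alpha> (T_alpha \<alpha>) t - \<alpha> t)"

definition N_alpha :: "(real \<Rightarrow> real^4) \<Rightarrow> real \<Rightarrow> real^4" where
  "N_alpha \<alpha> t = (1 / kappa_g \<alpha> t) *\<^sub>R (dds \<alpha> (T_alpha \<alpha>) t - \<alpha> t)"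

definition B_alpha :: "(real \<Rightarrow> real^4) \<Rightarrow> real \<Rightarrow> real^4" where
  "B_alpha \<alpha> t = cross4 (\<alpha> t) (T_alpha \<alpha> t) (N_alpha \<alpha> t)"

definition tau_g :: "(real \<Rightarrow> real^4) \<Rightarrow> real \<Rightarrow> real" where
  "tau_g \<alpha> t = mink (dds \<alpha> (N_alpha \<alpha>) t) (B_alpha \<alpha> t)"

text \<open>Timelike rectifying curve w.r.t. p: p is not on the curve and at every point the
  tangent vector at \<alpha>(t) of the geodesic of S^3_1 joining p and \<alpha>(t) is pseudo-orthogonal
  to N_\<alpha>(t).  That geodesic lies in the plane spanned by p and \<alpha>(t), so its tangent at
  \<alpha>(t) is (a multiple of) the component of p pseudo-orthogonal to \<alpha>(t).\<close>
definition rectifying :: "real^4 \<Rightarrow> (real \<Rightarrow> real^4) \<Rightarrow> real set \<Rightarrow> bool" where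
  "rectifying p \<alpha> I \<longleftrightarrow> p \<notin> \<alpha> ` I \<and>
     (\<forall>t\<in>I. mink (p - mink p (\<alpha> t) *\<^sub>R \<alpha> t) (N_alpha \<alpha> t) = 0)"

end

theory Submission imports Defs begin

lemma vector_4 [simp]:
 "(vector [x,y,z,w] ::('a::zero)^4)$1 = x"
 "(vector [x,y,z,w] ::('a::zero)^4)$2 = y"
 "(vector [x,y,z,w] ::('a::zero)^4)$3 = z"
 "(vector [x,y,z,w] ::('a::zero)^4)$4 = w"
  unfolding vector_def by simp_all

lemma mink_sym: "mink x y = mink y x" by (simp add: mink_def algebra_simps)
lemma mink_add_left: "mink (x + y) z = mink x z + mink y z" by (simp add: mink_def algebra_simps)
lemma mink_add_right: "mink z (x + y) = mink z x + mink z y" by (simp add: mink_def algebra_simps)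
lemma mink_diff_left: "mink (x - y) z = mink x z - mink y z" by (simp add: mink_def algebra_simps)
lemma mink_diff_right: "mink z (x - y) = mink z x - mink z y" by (simp add: mink_def algebra_simps)
lemma mink_scaleR_left: "mink (a *\<^sub>R x) z = a * mink x z" by (simp add: mink_def algebra_simps)
lemma mink_scaleR_right: "mink z (a *\<^sub>R x) = a * mink z x" by (simp add: mink_def algebra_simps)
lemma mink_zero [simp]: "mink 0 z = 0" "mink z 0 = 0" by (simp_all add: mink_def)

lemmas mink_lin = mink_add_left mink_add_right mink_diff_left mink_diff_right mink_scaleR_left mink_scaleR_right

lemma bounded_bilinear_mink: "bounded_bilinear mink"
proof
  fix a a' b b' :: "real^4" and r :: real
  show "mink (a + a') b = mink a b + mink a' b" by (rule mink_add_left)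
  show "mink a (b + b') = mink a b + mink a b'" by (rule mink_add_right)
  show "mink (r *\<^sub>R a) b = r *\<^sub>R mink a b" by (simp add: mink_scaleR_left)
  show "mink a (r *\<^sub>R b) = r *\<^sub>R mink a b" by (simp add: mink_scaleR_right)
next
  show "\<exists>K. \<forall>a b. norm (mink a b) \<le> norm a * norm b * K"
  proof (intro exI allI)
    fix a b :: "real^4"
    have c: "\<bar>a$i * b$i\<bar> \<le> norm a * norm b" for i
      by (simp add: abs_mult mult_mono' component_le_norm_cart)
    have "norm (mink a b) \<le> \<bar>a$1 * b$1\<bar> + \<bar>a$2 * b$2\<bar> + \<bar>a$3 * b$3\<bar> + \<bar>a$4 * b$4\<bar>"
      unfolding mink_def real_norm_def by linarith
    also have "\<dots> \<le> norm a * norm b * 4" using c[of 1] c[of 2] c[of 3] c[of 4] by linarith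
    finally show "norm (mink a b) \<le> norm a * norm b * 4" .
  qed
qed

lemma mink_vderiv:
  assumes "(f has_vector_derivative f') (at t)" "(g has_vector_derivative g') (at t)"
  shows "((\<lambda>t. mink (f t) (g t)) has_real_derivative (mink (f t) g' + mink f' (g t))) (at t)"
  using bounded_bilinear.has_vector_derivative[OF bounded_bilinear_mink assms]
  by (simp add: has_real_derivative_iff_has_vector_derivative)

lemma deriv_const_open:
  fixes f :: "real \<Rightarrow> real"
  assumes "open I" "t \<in> I" "(f has_real_derivative f') (at t)" "\<And>y. y \<in> I \<Longrightarrow> f y = k"
  shows "f' = 0"
proof -
  have "((\<lambda>y. k) has_real_derivative f') (at t)"
    by (rule has_field_derivative_transform_within_open[OF assms(3) assms(1) assms(2)]) (use assms(4) in auto)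
  moreover have "((\<lambda>y. k) has_real_derivative 0) (at t)" by simp
  ultimately show ?thesis using DERIV_unique by blast
qed

definition lc4 :: "real^4 \<Rightarrow> real^4 \<Rightarrow> real^4 \<Rightarrow> real^4 \<Rightarrow> real \<Rightarrow> real \<Rightarrow> real \<Rightarrow> real \<Rightarrow> real^4" where
  "lc4 P G H K a b c d = a *\<^sub>R P + b *\<^sub>R G + c *\<^sub>R H + d *\<^sub>R K"

lemma lc4_add: "lc4 P G H K a b c d + lc4 P G H K a' b' c' d' = lc4 P G H K (a+a') (b+b') (c+c') (d+d')"
  by (simp add: lc4_def algebra_simps)
lemma lc4_diff: "lc4 P G H K a b c d - lc4 P G H K a' b' c' d' = lc4 P G H K (a-a') (b-b') (c-c') (d-d')"
  by (simp add: lc4_def algebra_simps)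
lemma lc4_scale: "r *\<^sub>R lc4 P G H K a b c d = lc4 P G H K (r*a) (r*b) (r*c) (r*d)"
  by (simp add: lc4_def algebra_simps)

lemma lc4_cong: "a = a' \<Longrightarrow> b = b' \<Longrightarrow> c = c' \<Longrightarrow> d = d' \<Longrightarrow> lc4 P G H K a b c d = lc4 P G H K a' b' c' d'"
  by simp

lemma lc4_mink:
  assumes "mink P P = 1" "mink G P = 0" "mink H P = 0" "mink K P = 0" "mink G G = 1"
    "mink G H = 0" "mink G K = 1" "mink H H = -1" "mink H K = 0"
  shows "mink (lc4 P G H K a b c d) (lc4 P G H K a' b' c' d') =
     a*a' + b*b' + b*d' + d*b' - c*c' + mink K K * d*d'"
proof -
  have s: "mink P G = 0" "mink P H = 0" "mink P K = 0" "mink H G = 0" "mink K G = 1" "mink K H = 0"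
    using assms mink_sym by metis+
  show ?thesis using assms s unfolding lc4_def
    by (simp add: mink_lin algebra_simps)
qed

definition Qm :: "real^4^4" where "Qm = (\<chi> i j. if i = j then (if i = 1 then -1 else 1) else 0)"
lemma MQ: "((M::real^4^4) ** Qm) $ i $ k = M$i$k * (if k = 1 then -1 else 1)"
proof -
  have "((M::real^4^4) ** Qm) $ i $ k = (\<Sum>l\<in>UNIV. if l = k then M$i$l * (if k = 1 then -1 else 1) else 0)"
    unfolding matrix_matrix_mult_def Qm_def vec_lambda_beta by (intro sum.cong refl) auto
  also have "\<dots> = M$i$k * (if k = 1 then -1 else 1)" by simp
  finally show ?thesis .
qed
lemma gram_entry: "((M::real^4^4) ** Qm ** transpose M) $ i $ j = mink (M$i) (M$j)"
  unfolding matrix_matrix_mult_def[of "M ** Qm"] by (simp add: MQ transpose_def sum_4 mink_def)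

lemma prod_4: "prod f (UNIV::4 set) = f 1 * f 2 * f 3 * f 4"
  unfolding UNIV_4 by (simp add: ac_simps)

lemma det_Qm: "det Qm = -1"
proof -
  have "det Qm = prod (\<lambda>i. Qm$i$i) UNIV" by (rule det_diagonal) (simp add: Qm_def)
  also have "\<dots> = -1" unfolding prod_4 by (simp add: Qm_def)
  finally show ?thesis .
qed

lemma det_frame:
  fixes P G H K :: "real^4"
  assumes "mink P P = 1" "mink G P = 0" "mink H P = 0" "mink K P = 0" "mink G G = 1"
    "mink G H = 0" "mink G K = 1" "mink H H = -1" "mink H K = 0"
  shows "(det4 G H K P)^2 = mink K K - 1"
proof -
  define M where "M = (vector [G, H, K, P] :: real^4^4)"
  define M' where "M' = (vector [G, H, K - G, P] :: real^4^4)"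
  have s: "mink P G = 0" "mink P H = 0" "mink P K = 0" "mink H G = 0" "mink K G = 1" "mink K H = 0"
    using assms mink_sym by metis+
  have eq: "(\<chi> k. if k = 3 then row 3 M + (-1) *s row 1 M else row k M) = M'"
    by (simp add: vec_eq_iff forall_4 row_def M_def M'_def vector_scalar_mult_def)
  have d1: "det M' = det M"
    using det_row_operation[where i="3::4" and j=1 and c="-1" and A=M] eq by simp
  have ent: "(M' ** Qm ** transpose M') $ i $ j = mink (M'$i) (M'$j)" for i j
    by (rule gram_entry)
  have off: "(M' ** Qm ** transpose M') $ i $ j = 0" if "i \<noteq> j" for i j
    unfolding ent using that exhaust_4[of i] exhaust_4[of j] assms s
    by (auto simp: M'_def mink_lin)
  have "det (M' ** Qm ** transpose M') = prod (\<lambda>i. (M' ** Qm ** transpose M')$i$i) UNIV"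
    by (rule det_diagonal) (rule off)
  also have "\<dots> = - (mink K K - 1)"
    unfolding prod_4 ent using assms s by (simp add: M'_def mink_lin)
  finally have a: "det (M' ** Qm ** transpose M') = - (mink K K - 1)" .
  have "det (M' ** Qm ** transpose M') = - ((det M')^2)"
    by (simp add: det_mul det_Qm power2_eq_square)
  with a d1 show ?thesis by (simp add: det4_def M_def)
qed

lemma alg1:
  fixes sn c e1 e2 g w2 m x1 x2 x3 x4 A :: real
  assumes sc: "sn ^ 2 + c ^ 2 = 1" and w: "w2 = sn ^ 2 - e1 ^ 2" and wp: "w2 > 0"
  and m_def: "m = e1 * (e2 - sn * c)"
  and x1_def: "x1 = (- (e2 * sn) - e1 ^ 2 * c) / w2 + m / w2 ^ 2 * (- (e1 * sn)) - c"
  and x2_def: "x2 = (e2 * c - e1 ^ 2 * sn) / w2 + m / w2 ^ 2 * (e1 * c) - sn"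
  and x3_def: "x3 = 2 * c * e1 / w2 + m / w2 ^ 2 * sn"
  and x4_def: "x4 = sn / w2"
  and A_def: "A = (e2 + sn * c) * sn - 2 * c * e1 ^ 2"
  shows "w2 ^ 2 * (x1 * x1 + x2 * x2 + x2 * x4 + x4 * x2 - x3 * x3 + g * x4 * x4) = sn ^ 2 * (g - 1) + A ^ 2 / w2"
        "sn ^ 2 * x1 - c * sn * (x2 + x4) = - (sn ^ 2 * A / w2 ^ 2)"
proof -
  have ne: "w2 \<noteq> 0" using wp by simp
  have "w2 ^ 2 * (x1 * x1 + x2 * x2 + x2 * x4 + x4 * x2 - x3 * x3 + g * x4 * x4) * w2 ^ 3 = (sn ^ 2 * (g - 1) + A ^ 2 / w2) * w2 ^ 3"
    unfolding x1_def x2_def x3_def x4_def A_def m_def using ne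
    apply (simp add: field_simps power2_eq_square power3_eq_cube)
    using sc w by algebra
  then show "w2 ^ 2 * (x1 * x1 + x2 * x2 + x2 * x4 + x4 * x2 - x3 * x3 + g * x4 * x4) = sn ^ 2 * (g - 1) + A ^ 2 / w2" using ne by simp
  have "(sn ^ 2 * x1 - c * sn * (x2 + x4)) * w2 ^ 2 = (- (sn ^ 2 * A / w2 ^ 2)) * w2 ^ 2"
    unfolding x1_def x2_def x3_def x4_def A_def m_def using ne
    apply (simp add: field_simps power2_eq_square power3_eq_cube)
    using sc w by algebra
  then show "sn ^ 2 * x1 - c * sn * (x2 + x4) = - (sn ^ 2 * A / w2 ^ 2)" using ne by (simp add: field_simps)
qed

theorem theorem3p5:
  fixes p :: "real^4" and \<gamma> \<gamma>1 \<gamma>2 \<gamma>3 :: "real \<Rightarrow> real^4"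
    and \<eta> \<eta>1 \<eta>2 \<eta>3 :: "real \<Rightarrow> real" and I :: "real set"
    and \<alpha> :: "real \<Rightarrow> real^4"
  assumes I: "open I" "is_interval I" "I \<noteq> {}"
    and p: "mink p p = 1"
    and d\<gamma>: "\<And>t. t \<in> I \<Longrightarrow> (\<gamma> has_vector_derivative \<gamma>1 t) (at t)"
              "\<And>t. t \<in> I \<Longrightarrow> (\<gamma>1 has_vector_derivative \<gamma>2 t) (at t)"
              "\<And>t. t \<in> I \<Longrightarrow> (\<gamma>2 has_vector_derivative \<gamma>3 t) (at t)"
    and \<gamma>_S12: "\<And>t. t \<in> I \<Longrightarrow> mink (\<gamma> t) p = 0 \<and> mink (\<gamma> t) (\<gamma> t) = 1"
    and \<gamma>_timelike_unit: "\<And>t. t \<in> I \<Longrightarrow> mink (\<gamma>1 t) (\<gamma>1 t) = -1"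
    and d\<eta>: "\<And>t. t \<in> I \<Longrightarrow> (\<eta> has_real_derivative \<eta>1 t) (at t)"
              "\<And>t. t \<in> I \<Longrightarrow> (\<eta>1 has_real_derivative \<eta>2 t) (at t)"
              "\<And>t. t \<in> I \<Longrightarrow> (\<eta>2 has_real_derivative \<eta>3 t) (at t)"
    and \<eta>_nonzero: "\<And>t. t \<in> I \<Longrightarrow> \<eta> t \<noteq> 0"
    and \<alpha>_def: "\<alpha> = (\<lambda>t. cos (\<eta> t) *\<^sub>R p + sin (\<eta> t) *\<^sub>R \<gamma> t)"
    and \<alpha>_timelike: "\<And>t. t \<in> I \<Longrightarrow> mink (vd \<alpha> t) (vd \<alpha> t) < 0"
    and non_geodesic: "\<And>t. t \<in> I \<Longrightarrow> kappa_g \<alpha> t > 0"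
    and non_planar: "\<And>t. t \<in> I \<Longrightarrow> tau_g \<alpha> t \<noteq> 0"
  shows "(\<forall>t\<in>I. (kappa_gamma p \<gamma> t)\<^sup>2
                   \<le> mnorm (vd \<alpha> t) ^ 4 * (kappa_g \<alpha> t)\<^sup>2 / (sin (\<eta> t))\<^sup>2)
       \<and> ((\<forall>t\<in>I. (kappa_gamma p \<gamma> t)\<^sup>2
                   = mnorm (vd \<alpha> t) ^ 4 * (kappa_g \<alpha> t)\<^sup>2 / (sin (\<eta> t))\<^sup>2)
          \<longleftrightarrow> rectifying p \<alpha> I)"
proof -
  have vdg: "vd \<gamma> y = \<gamma>1 y" if "y \<in> I" for y using d\<gamma>(1)[OF that] by (rule vector_derivative_at)
  have g0p: "mink (\<gamma> y) p = 0" and g0g: "mink (\<gamma> y) (\<gamma> y) = 1" if "y \<in> I" for y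
    using \<gamma>_S12[OF that] by auto
  have g1p: "mink (\<gamma>1 y) p = 0" if y: "y \<in> I" for y
  proof -
    have D: "((\<lambda>t. mink (\<gamma> t) p) has_real_derivative (mink (\<gamma> y) 0 + mink (\<gamma>1 y) p)) (at y)"
      by (rule mink_vderiv[OF d\<gamma>(1)[OF y] has_vector_derivative_const])
    have "mink (\<gamma> y) 0 + mink (\<gamma>1 y) p = 0"
      by (rule deriv_const_open[where k=0, OF I(1) y D]) (simp add: g0p)
    then show ?thesis by simp
  qed
  have g1g: "mink (\<gamma> y) (\<gamma>1 y) = 0" if y: "y \<in> I" for y
  proof -
    have D: "((\<lambda>t. mink (\<gamma> t) (\<gamma> t)) has_real_derivative (mink (\<gamma> y) (\<gamma>1 y) + mink (\<gamma>1 y) (\<gamma> y))) (at y)"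
      by (rule mink_vderiv[OF d\<gamma>(1)[OF y] d\<gamma>(1)[OF y]])
    have "mink (\<gamma> y) (\<gamma>1 y) + mink (\<gamma>1 y) (\<gamma> y) = 0"
      by (rule deriv_const_open[where k=1, OF I(1) y D]) (simp add: g0g)
    then show ?thesis by (simp add: mink_sym[of "\<gamma>1 y"])
  qed
  define A1f where "A1f y = \<eta>1 y *\<^sub>R (cos (\<eta> y) *\<^sub>R \<gamma> y - sin (\<eta> y) *\<^sub>R p) + sin (\<eta> y) *\<^sub>R \<gamma>1 y" for y
  have d\<alpha>: "(\<alpha> has_vector_derivative A1f y) (at y)" if y: "y \<in> I" for y
    unfolding \<alpha>_def A1f_def
    by (auto intro!: derivative_eq_intros d\<eta>(1)[OF y] d\<gamma>(1)[OF y] simp: algebra_simps)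
  have vda: "vd \<alpha> y = A1f y" if "y \<in> I" for y using d\<alpha>[OF that] by (rule vector_derivative_at)
  have Mneg: "mink (A1f y) (A1f y) < 0" if "y \<in> I" for y using \<alpha>_timelike[OF that] vda[OF that] by simp
  have Ta: "T_alpha \<alpha> y = (1 / sqrt (- mink (A1f y) (A1f y))) *\<^sub>R A1f y" if "y \<in> I" for y
    using Mneg[OF that] vda[OF that] by (simp add: T_alpha_def mnorm_def)
  have key: "(kappa_gamma p \<gamma> t)\<^sup>2 \<le> mnorm (vd \<alpha> t) ^ 4 * (kappa_g \<alpha> t)\<^sup>2 / (sin (\<eta> t))\<^sup>2
     \<and> ((kappa_gamma p \<gamma> t)\<^sup>2 = mnorm (vd \<alpha> t) ^ 4 * (kappa_g \<alpha> t)\<^sup>2 / (sin (\<eta> t))\<^sup>2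
          \<longleftrightarrow> mink (p - mink p (\<alpha> t) *\<^sub>R \<alpha> t) (N_alpha \<alpha> t) = 0)
     \<and> \<alpha> t \<noteq> p" if t: "t \<in> I" for t
  proof -
    have g2p: "mink (\<gamma>2 t) p = 0"
    proof -
      have D: "((\<lambda>t. mink (\<gamma>1 t) p) has_real_derivative (mink (\<gamma>1 t) 0 + mink (\<gamma>2 t) p)) (at t)"
        by (rule mink_vderiv[OF d\<gamma>(2)[OF t] has_vector_derivative_const])
      have "mink (\<gamma>1 t) 0 + mink (\<gamma>2 t) p = 0"
        by (rule deriv_const_open[where k=0, OF I(1) t D]) (simp add: g1p)
      then show ?thesis by simp
    qed
    have g2g: "mink (\<gamma> t) (\<gamma>2 t) = 1"
    proof -
      have D: "((\<lambda>t. mink (\<gamma> t) (\<gamma>1 t)) has_real_derivative (mink (\<gamma> t) (\<gamma>2 t) + mink (\<gamma>1 t) (\<gamma>1 t))) (at t)"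
        by (rule mink_vderiv[OF d\<gamma>(1)[OF t] d\<gamma>(2)[OF t]])
      have "mink (\<gamma> t) (\<gamma>2 t) + mink (\<gamma>1 t) (\<gamma>1 t) = 0"
        by (rule deriv_const_open[where k=0, OF I(1) t D]) (simp add: g1g)
      then show ?thesis using \<gamma>_timelike_unit[OF t] by simp
    qed
    have g12: "mink (\<gamma>1 t) (\<gamma>2 t) = 0"
    proof -
      have D: "((\<lambda>t. mink (\<gamma>1 t) (\<gamma>1 t)) has_real_derivative (mink (\<gamma>1 t) (\<gamma>2 t) + mink (\<gamma>2 t) (\<gamma>1 t))) (at t)"
        by (rule mink_vderiv[OF d\<gamma>(2)[OF t] d\<gamma>(2)[OF t]])
      have "mink (\<gamma>1 t) (\<gamma>2 t) + mink (\<gamma>2 t) (\<gamma>1 t) = 0"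
        by (rule deriv_const_open[where k="-1", OF I(1) t D]) (simp add: \<gamma>_timelike_unit)
      then show ?thesis by (simp add: mink_sym[of "\<gamma>2 t"])
    qed
    have vdvdg: "vd (vd \<gamma>) t = \<gamma>2 t"
    proof -
      have "(vd \<gamma> has_vector_derivative \<gamma>2 t) (at t)"
        by (rule has_vector_derivative_transform_within_open[OF d\<gamma>(2)[OF t] I(1) t]) (simp add: vdg)
      then show ?thesis by (rule vector_derivative_at)
    qed
    define A2 where "A2 = \<eta>2 t *\<^sub>R (cos (\<eta> t) *\<^sub>R \<gamma> t - sin (\<eta> t) *\<^sub>R p) + \<eta>1 t *\<^sub>R ((- sin (\<eta> t) * \<eta>1 t) *\<^sub>R \<gamma> t + cos (\<eta> t) *\<^sub>R \<gamma>1 t - (cos (\<eta> t) * \<eta>1 t) *\<^sub>R p) + (cos (\<eta> t) * \<eta>1 t) *\<^sub>R \<gamma>1 t + sin (\<eta> t) *\<^sub>R \<gamma>2 t"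
    have dA1: "(A1f has_vector_derivative A2) (at t)"
      unfolding A1f_def[abs_def] A2_def
      apply (rule has_vector_derivative_eq_rhs)
       apply (rule derivative_eq_intros d\<eta>(1,2)[OF t] d\<gamma>(1,2)[OF t] refl)+
      by (simp add: algebra_simps)
    define Mt where "Mt = mink (A1f t) (A1f t)"
    define Md where "Md = mink (A1f t) A2 + mink A2 (A1f t)"
    have Mtneg: "Mt < 0" using Mneg[OF t] by (simp add: Mt_def)
    have dM: "((\<lambda>y. mink (A1f y) (A1f y)) has_real_derivative Md) (at t)"
      unfolding Md_def by (rule mink_vderiv[OF dA1 dA1])
    define hd where "hd = Md / (2 * sqrt (- Mt) * (- Mt))"
    have dh: "((\<lambda>y. 1 / sqrt (- mink (A1f y) (A1f y))) has_real_derivative hd) (at t)"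
    proof -
      have sq: "sqrt (- Mt) * sqrt (- Mt) = - Mt" using Mtneg by simp
      have pos: "sqrt (- Mt) > 0" using Mtneg by simp
      have d1: "((\<lambda>y. - mink (A1f y) (A1f y)) has_real_derivative - Md) (at t)"
        by (rule DERIV_minus[OF dM])
      have d2: "((\<lambda>y. sqrt (- mink (A1f y) (A1f y))) has_real_derivative (inverse (sqrt (- Mt)) / 2 * - Md)) (at t)"
        using DERIV_chain2[OF DERIV_real_sqrt d1] Mtneg by (simp add: Mt_def)
      have d3: "((\<lambda>y. inverse (sqrt (- mink (A1f y) (A1f y)))) has_real_derivative
           - ((inverse (sqrt (- Mt)) / 2 * - Md) * inverse ((sqrt (- Mt)) ^ 2))) (at t)"
        using DERIV_inverse_fun[OF d2] pos by (simp add: Mt_def)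
      show ?thesis
        unfolding inverse_eq_divide[symmetric]
        apply (rule DERIV_cong[OF d3])
        using sq pos Mtneg unfolding hd_def by (simp add: field_simps power2_eq_square)
    qed
    have dT: "(T_alpha \<alpha> has_vector_derivative (hd *\<^sub>R A1f t + (1 / sqrt (- Mt)) *\<^sub>R A2)) (at t)"
    proof (rule has_vector_derivative_transform_within_open[OF _ I(1) t])
      show "((\<lambda>y. (1 / sqrt (- mink (A1f y) (A1f y))) *\<^sub>R A1f y) has_vector_derivative (hd *\<^sub>R A1f t + (1 / sqrt (- Mt)) *\<^sub>R A2)) (at t)"
        using has_vector_derivative_scaleR[OF dh dA1] by (simp add: Mt_def add.commute)
      show "(1 / sqrt (- mink (A1f y) (A1f y))) *\<^sub>R A1f y = T_alpha \<alpha> y" if "y \<in> I" for y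
        using Ta[OF that] by simp
    qed
    have vdT: "vd (T_alpha \<alpha>) t = hd *\<^sub>R A1f t + (1 / sqrt (- Mt)) *\<^sub>R A2"
      using dT by (rule vector_derivative_at)
    define sn where "sn = sin (\<eta> t)"
    define cs where "cs = cos (\<eta> t)"
    define e1 where "e1 = \<eta>1 t"
    define e2 where "e2 = \<eta>2 t"
    define G where "G = \<gamma> t"
    define H where "H = \<gamma>1 t"
    define K where "K = \<gamma>2 t"
    define g where "g = mink K K"
    have gram: "mink p p = 1" "mink G p = 0" "mink H p = 0" "mink K p = 0" "mink G G = 1"
      "mink G H = 0" "mink G K = 1" "mink H H = -1" "mink H K = 0"
      using p g0p[OF t] g0g[OF t] g1p[OF t] g2p g1g[OF t] g2g \<gamma>_timelike_unit[OF t] g12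
      by (simp_all add: G_def H_def K_def)
    note LM = lc4_mink[OF gram]
    have scid: "sn ^ 2 + cs ^ 2 = 1" by (simp add: sn_def cs_def)
    have A1e: "A1f t = lc4 p G H K (- (e1 * sn)) (e1 * cs) sn 0"
      by (simp add: A1f_def lc4_def algebra_simps sn_def cs_def e1_def G_def H_def)
    have A2e: "A2 = lc4 p G H K (- (e2 * sn) - e1 ^ 2 * cs) (e2 * cs - e1 ^ 2 * sn) (2 * cs * e1) sn"
      by (simp add: vec_eq_iff A2_def lc4_def algebra_simps sn_def cs_def e1_def e2_def G_def H_def K_def power2_eq_square)
    have ae: "\<alpha> t = lc4 p G H K cs sn 0 0"
      by (simp add: \<alpha>_def lc4_def sn_def cs_def G_def)
    have Mt_val: "Mt = e1 ^ 2 - sn ^ 2"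
      unfolding Mt_def A1e LM using scid by algebra
    have Md_val: "Md = 2 * (e1 * (e2 - sn * cs))"
      unfolding Md_def A1e A2e LM using scid by algebra
    define w2 where "w2 = sn ^ 2 - e1 ^ 2"
    have w2pos: "w2 > 0" using Mtneg Mt_val w2_def by simp
    define r where "r = sqrt w2"
    have rpos: "r > 0" using w2pos r_def by simp
    have rr: "r * r = w2" using w2pos r_def by simp
    have sqMt: "sqrt (- Mt) = r" using Mt_val w2_def r_def by simp
    have mn: "mnorm (vd \<alpha> t) = r" using vda[OF t] Mt_val sqMt Mtneg by (simp add: mnorm_def Mt_def)
    define m where "m = e1 * (e2 - sn * cs)"
    have Mtw: "Mt = - w2" using Mt_val w2_def by simp
    have hd_val: "hd = m / (r * w2)" unfolding hd_def Md_val sqMt m_def using rpos w2pos Mtw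
      by (simp add: field_simps)
    define x1 where "x1 = (- (e2 * sn) - e1 ^ 2 * cs) / w2 + m / w2 ^ 2 * (- (e1 * sn)) - cs"
    define x2 where "x2 = (e2 * cs - e1 ^ 2 * sn) / w2 + m / w2 ^ 2 * (e1 * cs) - sn"
    define x3 where "x3 = 2 * cs * e1 / w2 + m / w2 ^ 2 * sn"
    define x4 where "x4 = sn / w2"
    define Aq where "Aq = (e2 + sn * cs) * sn - 2 * cs * e1 ^ 2"
    note AL = alg1[OF scid w2_def w2pos m_def x1_def x2_def x3_def x4_def Aq_def]
    define X where "X = dds \<alpha> (T_alpha \<alpha>) t - \<alpha> t"
    have Xe: "X = lc4 p G H K x1 x2 x3 x4"
    proof -
      have "X = (1 / r) *\<^sub>R (hd *\<^sub>R A1f t + (1 / r) *\<^sub>R A2) - \<alpha> t"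
        unfolding X_def dds_def vdT mn sqMt ..
      also have "\<dots> = lc4 p G H K ((1 / r) * (hd * (- (e1 * sn)) + (1 / r) * (- (e2 * sn) - e1 ^ 2 * cs)) - cs)
          ((1 / r) * (hd * (e1 * cs) + (1 / r) * (e2 * cs - e1 ^ 2 * sn)) - sn)
          ((1 / r) * (hd * sn + (1 / r) * (2 * cs * e1)) - 0)
          ((1 / r) * (hd * 0 + (1 / r) * sn) - 0)"
        unfolding A1e A2e ae lc4_scale lc4_add lc4_diff ..
      also have "\<dots> = lc4 p G H K x1 x2 x3 x4"
        unfolding x1_def x2_def x3_def x4_def hd_val rr[symmetric]
        by (rule lc4_cong) (use rpos in \<open>simp_all add: field_simps power2_eq_square\<close>)
      finally show ?thesis .
    qed
    define Q where "Q = mink X X"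
    have Qv: "w2 ^ 2 * Q = sn ^ 2 * (g - 1) + Aq ^ 2 / w2"
      using AL(1) unfolding Q_def Xe LM g_def by simp
    have kgam: "kappa_gamma p \<gamma> t = det4 G H K p"
      by (simp add: kappa_gamma_def vdg[OF t] vdvdg G_def H_def K_def)
    have kg2: "(kappa_gamma p \<gamma> t)\<^sup>2 = g - 1" using det_frame[OF gram] kgam g_def by simp
    have g1: "g - 1 \<ge> 0" using kg2 by (metis zero_le_power2)
    have snpos: "sn ^ 2 > 0" using w2pos w2_def
      by (metis add_pos_nonneg diff_add_cancel zero_le_power2)
    have Qnn: "Q \<ge> 0"
    proof -
      have "w2 ^ 2 * Q \<ge> 0" unfolding Qv using g1 w2pos snpos by (simp add: add_nonneg_nonneg)
      then show ?thesis using w2pos by (simp add: zero_le_mult_iff)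
    qed
    have kgv: "kappa_g \<alpha> t = sqrt Q"
      using Qnn by (simp add: kappa_g_def mnorm_def X_def[symmetric] Q_def)
    have r4: "r ^ 4 = w2 ^ 2" using rr by (metis power2_eq_square power_mult_distrib numeral_Bit0 power_add mult_2)
    have RHS: "mnorm (vd \<alpha> t) ^ 4 * (kappa_g \<alpha> t)\<^sup>2 / (sin (\<eta> t))\<^sup>2 = (g - 1) + Aq ^ 2 / (w2 * sn ^ 2)"
    proof -
      have "mnorm (vd \<alpha> t) ^ 4 * (kappa_g \<alpha> t)\<^sup>2 / (sin (\<eta> t))\<^sup>2 = w2 ^ 2 * Q / sn ^ 2"
        unfolding mn kgv sn_def[symmetric] r4 using Qnn by simp
      also have "\<dots> = (sn ^ 2 * (g - 1) + Aq ^ 2 / w2) / sn ^ 2" unfolding Qv ..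
      also have "\<dots> = (g - 1) + Aq ^ 2 / (w2 * sn ^ 2)" using snpos w2pos by (simp add: field_simps)
      finally show ?thesis .
    qed
    have pe: "p = lc4 p G H K 1 0 0 0" by (simp add: lc4_def)
    have Ge: "G = lc4 p G H K 0 1 0 0" by (simp add: lc4_def)
    have mpa: "mink p (\<alpha> t) = cs" unfolding ae by (subst pe, unfold LM) simp
    have pca: "p - cs *\<^sub>R \<alpha> t = lc4 p G H K (1 - cs * cs) (- (cs * sn)) 0 0"
      unfolding ae by (subst pe, unfold lc4_scale lc4_diff) (rule lc4_cong, simp_all)
    have kgpos: "kappa_g \<alpha> t > 0" by (rule non_geodesic[OF t])
    have Ne: "N_alpha \<alpha> t = (1 / kappa_g \<alpha> t) *\<^sub>R X" by (simp add: N_alpha_def X_def)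
    have rect: "mink (p - mink p (\<alpha> t) *\<^sub>R \<alpha> t) (N_alpha \<alpha> t) = (1 / kappa_g \<alpha> t) * (- (sn ^ 2 * Aq / w2 ^ 2))"
    proof -
      have "mink (p - mink p (\<alpha> t) *\<^sub>R \<alpha> t) (N_alpha \<alpha> t) = (1 / kappa_g \<alpha> t) * mink (p - cs *\<^sub>R \<alpha> t) X"
        unfolding mpa Ne by (simp add: mink_scaleR_right)
      also have "mink (p - cs *\<^sub>R \<alpha> t) X = sn ^ 2 * x1 - cs * sn * (x2 + x4)"
      proof -
        have c1: "1 - cs * cs = sn ^ 2" using scid unfolding power2_eq_square by linarith
        show ?thesis unfolding pca Xe LM c1 by (simp add: algebra_simps)
      qed
      finally show ?thesis using AL(2) by simp
    qed
    have ane: "\<alpha> t \<noteq> p"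
    proof
      assume "\<alpha> t = p"
      then have "mink (\<alpha> t) G = mink p G" by simp
      moreover have "mink (\<alpha> t) G = sn" unfolding ae by (subst Ge, unfold LM) simp
      moreover have "mink p G = 0" using gram(2) mink_sym by metis
      ultimately have "sn = 0" by simp
      then show False using snpos by simp
    qed
    have "Aq ^ 2 / (w2 * sn ^ 2) \<ge> 0" using w2pos snpos by simp
    moreover have "Aq ^ 2 / (w2 * sn ^ 2) = 0 \<longleftrightarrow> Aq = 0" using w2pos snpos by simp
    moreover have "(1 / kappa_g \<alpha> t) * (- (sn ^ 2 * Aq / w2 ^ 2)) = 0 \<longleftrightarrow> Aq = 0"
      using kgpos snpos w2pos by simp
    ultimately show ?thesis unfolding RHS kg2 rect using ane by auto
  qed
  have nin: "p \<notin> \<alpha> ` I" using key by force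
  show ?thesis unfolding rectifying_def using key nin by blast
qed

end
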